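(* Let $\rho_0>0$, $\beta>0$, and let $f:\mathbb{R}^d\to\mathbb{R}_+$ be Lipschitz continuous with $|\nabla f|_\infty\le1$ satisfying $(G_{\rho_0,\beta})$ with set $A\subset S^{d-1}$. Let $V$ be a $C^2$ function on $\mathbb{R}^d$ with $e^{-V}$ Lebesgue integrable and such that for some $\bar\lambda\ge1$, $\bar\lambda I_{d\times d}\ge\mathrm{Hess}(V)\ge0$; let $\gamma(dx)=Z^{-1}e^{-V(x)}dx$ be the associated Gibbs probability measure. Let $\mu(dx)=m(x)dx$ be a probability measure and assume there is $\kappa\ge1$ such that $m(x)\ge\kappa^{-1}Z^{-1}e^{-V(x)}$ for $|x|\ge\rho_0$. Let $\bar\Lambda=\frac{\bar\lambda}{2}+\frac{\sup_{s\in S^{d-1}}|V(s\rho_0)|}{\rho_0^2}+\frac{\sup_{s\in S^{d-1}}|\nabla V(s\rho_0)|}{\rho_0}$. Then, with $Y\sim\mu$, for all $r>0$, $$\mathbb{P}_\mu\left[f(Y)-\mu(f)\ge r-(W_1(\mu,\gamma)+\delta(f,\gamma))\right]\ge\begin{cases}\frac{K(d,A)}{Z\bar\Lambda^{d/2}\kappa}\exp\left(-\bar\Lambda\left[\frac r\beta\vee\rho_0\right]^2\right),& d\text{ even},\\ \frac{\arccos(\theta^{-1/2})K(d,A)}{Z\bar\Lambda^{d/2}\kappa}\exp\left(-\theta\bar\Lambda\left[\frac r\beta\vee\rho_0\right]^2\right)\ \text{for all }\theta>1,& d\text{ odd},\end{cases}$$ where $\delta(f,\gamma)=\gamma(f)+\beta\rho_0-\underline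 f$, $\underline f=\inf_{s\in S^{d-1}}f(s\rho_0)$, and $K(d,A)=\frac{|A|(d/2-1)!}{2}$ for $d$ even, $K(d,A)=\frac{|A|\prod_{j=1}^{(d-1)/2}(j-1/2)}{\pi^{1/2}}$ for $d$ odd.
   Context: $(G_{\rho_0,\beta})$ for $F:\mathbb{R}^d\to\mathbb{R}$: there exists $A\subset S^{d-1}$ (of non-empty interior and surface measure $|A|\ge\varepsilon>0$ for $d\ge2$; $A\subset\{-1,1\}$ for $d=1$) such that for every $y$ with $|y|\ge\rho_0$ and $\pi_{S^{d-1}}(y):=y/|y|\in A$, with $y_0=\rho_0\pi_{S^{d-1}}(y)$, $F(y)-F(y_0)\ge\beta|y-y_0|$. $|A|$ denotes the surface (Lebesgue) measure of $A$ on $S^{d-1}$. $\mu(f)=\int f\,d\mu$. $W_1(\mu,\gamma)=\sup_{|\nabla F|_\infty\le1}|\mu(F)-\gamma(F)|$, supremum over Lipschitz $F$ with essential sup of the gradient norm at most $1$. *)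

theory Defs
  imports "HOL-Analysis.Analysis"
begin

definition unit_cone :: "'a::euclidean_space set \<Rightarrow> 'a set" where
  "unit_cone A = {t *\<^sub>R s | t s. 0 < t \<and> t \<le> 1 \<and> s \<in> A}"

text \<open>Surface (Hausdorff) measure |A| of a subset A of the unit sphere S^{d-1}, given by the
  classical cone formula |A| = d * Leb({t s : 0<t<=1, s in A}). For d = 1 this is the
  counting measure on {-1,1}.\<close>
definition sphere_measure :: "'a::euclidean_space set \<Rightarrow> real" where
  "sphere_measure A = real DIM('a) * measure lebesgue (unit_cone A)"

definition G_cond :: "real \<Rightarrow> real \<Rightarrow> ('a::euclidean_space \<Rightarrow> real) \<Rightarrow> 'a set \<Rightarrow> bool" where
  "G_cond \<rho>\<^sub>0 \<beta> F A \<longleftrightarrow>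
     A \<subseteq> sphere 0 1 \<and> unit_cone A \<in> sets lebesgue \<and>
     (DIM('a) \<ge> 2 \<longrightarrow>
        (\<exists>U. open U \<and> U \<inter> sphere 0 1 \<noteq> {} \<and> U \<inter> sphere 0 1 \<subseteq> A) \<and> sphere_measure A > 0) \<and>
     (\<forall>y. norm y \<ge> \<rho>\<^sub>0 \<and> y /\<^sub>R norm y \<in> A \<longrightarrow>
        F y - F (\<rho>\<^sub>0 *\<^sub>R (y /\<^sub>R norm y)) \<ge> \<beta> * norm (y - \<rho>\<^sub>0 *\<^sub>R (y /\<^sub>R norm y)))"

text \<open>Wasserstein-1 distance (Kantorovich-Rubinstein dual form): supremum over
  Lipschitz F with |grad F|_inf <= 1, i.e. 1-Lipschitz F.\<close>
definition W1 :: "'a::euclidean_space measure \<Rightarrow> 'a measure \<Rightarrow> real" where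
  "W1 M N = (SUP F \<in> {F. 1-lipschitz_on UNIV F}. \<bar>(\<integral>x. F x \<partial>M) - (\<integral>x. F x \<partial>N)\<bar>)"

end

theory Submission
  imports Defs "HOL-Probability.Probability_Measure"
begin



lemma V_line_derivs:
  fixes V :: "'a::euclidean_space \<Rightarrow> real" and gradV :: "'a \<Rightarrow> 'a" and H :: "'a \<Rightarrow> 'a \<Rightarrow>\<^sub>L 'a"
  assumes V_grad: "\<And>x. (V has_derivative (\<lambda>h. gradV x \<bullet> h)) (at x)"
    and V_hess: "\<And>x. (gradV has_derivative blinfun_apply (H x)) (at x)"
  shows "((\<lambda>t. V (x + t *\<^sub>R h)) has_real_derivative (gradV (x + t *\<^sub>R h) \<bullet> h)) (at t)"
    and "((\<lambda>t. gradV (x + t *\<^sub>R h) \<bullet> h) has_real_derivative (h \<bullet> H (x + t *\<^sub>R h) h)) (at t)"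
proof -
  have l: "((\<lambda>t. x + t *\<^sub>R h) has_derivative (\<lambda>s. s *\<^sub>R h)) (at t)"
    by (auto intro!: derivative_eq_intros)
  have "((\<lambda>t. V (x + t *\<^sub>R h)) has_derivative (\<lambda>s. gradV (x + t *\<^sub>R h) \<bullet> (s *\<^sub>R h))) (at t)"
    by (rule has_derivative_compose[OF l V_grad])
  then show "((\<lambda>t. V (x + t *\<^sub>R h)) has_real_derivative (gradV (x + t *\<^sub>R h) \<bullet> h)) (at t)"
    unfolding has_field_derivative_def by (simp add: mult_commute_abs)
  have "((\<lambda>t. gradV (x + t *\<^sub>R h)) has_derivative (\<lambda>s. H (x + t *\<^sub>R h) (s *\<^sub>R h))) (at t)"
    by (rule has_derivative_compose[OF l V_hess])
  then have "((\<lambda>t. gradV (x + t *\<^sub>R h) \<bullet> h) has_derivative (\<lambda>s. H (x + t *\<^sub>R h) (s *\<^sub>R h) \<bullet> h)) (at t)"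
    by (rule has_derivative_inner_left)
  then show "((\<lambda>t. gradV (x + t *\<^sub>R h) \<bullet> h) has_real_derivative (h \<bullet> H (x + t *\<^sub>R h) h)) (at t)"
    unfolding has_field_derivative_def by (simp add: blinfun.scaleR_right inner_commute mult_commute_abs)
qed

lemma taylor_1d:
  fixes g g' g'' :: "real \<Rightarrow> real"
  assumes g: "\<And>t. (g has_real_derivative g' t) (at t)"
    and g': "\<And>t. (g' has_real_derivative g'' t) (at t)"
    and M: "\<And>t. g'' t \<le> M"
  shows "g 1 \<le> g 0 + g' 0 + M / 2"
proof -
  define h' where "h' t = g' t - g' 0 - M * t" for t
  have dh': "(h' has_real_derivative (g'' t - M)) (at t)" for t
    unfolding h'_def by (auto intro!: derivative_eq_intros g')
  have h'nonpos: "h' t \<le> 0" if "0 \<le> t" for t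
    using DERIV_nonpos_imp_nonincreasing[of 0 t h'] dh' M that
    by (fastforce simp: h'_def)
  define h where "h t = g t - g 0 - g' 0 * t - M / 2 * t^2" for t
  have dh: "(h has_real_derivative h' t) (at t)" for t
    unfolding h_def h'_def by (auto intro!: derivative_eq_intros g)
  have "h 1 \<le> h 0"
    using DERIV_nonpos_imp_nonincreasing[of 0 1 h] dh h'nonpos by fastforce
  then show ?thesis by (simp add: h_def)
qed

lemma convex_1d:
  fixes g g' g'' :: "real \<Rightarrow> real"
  assumes g: "\<And>t. (g has_real_derivative g' t) (at t)"
    and g': "\<And>t. (g' has_real_derivative g'' t) (at t)"
    and M: "\<And>t. g'' t \<ge> 0"
  shows "convex_on UNIV g"
proof (rule convex_on_realI[OF connected_UNIV])
  show "(g has_real_derivative g' x) (at x)" for x by (rule g)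
  show "g' x \<le> g' y" if "x \<le> y" for x y
    using DERIV_nonneg_imp_nondecreasing[of x y g'] g' M that by blast
qed


lemma V_convex:
  fixes V :: "'a::euclidean_space \<Rightarrow> real" and gradV :: "'a \<Rightarrow> 'a" and H :: "'a \<Rightarrow> 'a \<Rightarrow>\<^sub>L 'a"
  assumes V_grad: "\<And>x. (V has_derivative (\<lambda>h. gradV x \<bullet> h)) (at x)"
    and V_hess: "\<And>x. (gradV has_derivative blinfun_apply (H x)) (at x)"
    and pos: "\<And>x v. 0 \<le> v \<bullet> H x v"
  shows "convex_on UNIV V"
proof (rule convex_onI)
  fix t x y :: 'a and u :: real
  assume u: "0 < u" "u < 1"
  let ?g = "\<lambda>t. V (x + t *\<^sub>R (y - x))"
  have "convex_on UNIV ?g"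
    by (rule convex_1d[OF V_line_derivs(1)[OF V_grad V_hess] V_line_derivs(2)[OF V_grad V_hess] pos])
  from convex_onD[OF this, of u 0 1] u
  have "?g ((1 - u) *\<^sub>R 0 + u *\<^sub>R 1) \<le> (1 - u) * ?g 0 + u * ?g 1" by simp
  moreover have "x + ((1 - u) *\<^sub>R 0 + u *\<^sub>R 1) *\<^sub>R (y - x) = (1 - u) *\<^sub>R x + u *\<^sub>R y"
    by (simp add: algebra_simps)
  ultimately show "V ((1 - u) *\<^sub>R x + u *\<^sub>R y) \<le> (1 - u) * V x + u * V y" by simp
qed simp

lemma V_taylor_upper:
  fixes V :: "'a::euclidean_space \<Rightarrow> real" and gradV :: "'a \<Rightarrow> 'a" and H :: "'a \<Rightarrow> 'a \<Rightarrow>\<^sub>L 'a"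
  assumes V_grad: "\<And>x. (V has_derivative (\<lambda>h. gradV x \<bullet> h)) (at x)"
    and V_hess: "\<And>x. (gradV has_derivative blinfun_apply (H x)) (at x)"
    and up: "\<And>x v. v \<bullet> H x v \<le> lam * (norm v)\<^sup>2"
  shows "V y \<le> V x + gradV x \<bullet> (y - x) + lam / 2 * (norm (y - x))\<^sup>2"
proof -
  let ?g = "\<lambda>t. V (x + t *\<^sub>R (y - x))"
  have "?g 1 \<le> ?g 0 + gradV (x + 0 *\<^sub>R (y - x)) \<bullet> (y - x) + lam * (norm (y - x))\<^sup>2 / 2"
    by (rule taylor_1d[OF V_line_derivs(1)[OF V_grad V_hess] V_line_derivs(2)[OF V_grad V_hess] up])
  then show ?thesis by simp
qed




lemma convex_sublevel_bounded:
  fixes V :: "'a::euclidean_space \<Rightarrow> real"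
  assumes conv: "convex_on UNIV V" and cont: "continuous_on UNIV V"
    and int: "integrable lborel (\<lambda>x. exp (- V x))"
  obtains M where "M > 0" "\<And>x. V x \<le> V 0 + 1 \<Longrightarrow> norm x \<le> M"
proof -
  define c1 where "c1 = V 0 + 1"
  have "isCont V 0" using cont by (simp add: continuous_on_eq_continuous_at)
  then obtain \<delta> where \<delta>: "\<delta> > 0" "\<And>w. dist w 0 < \<delta> \<Longrightarrow> dist (V w) (V 0) < 1"
    unfolding continuous_at_eps_delta by (meson zero_less_one)
  have Vw: "V w \<le> c1" if "norm w < \<delta>" for w
    using \<delta>(2)[of w] that by (auto simp: c1_def dist_norm)
  define Z where "Z = (\<integral>x. exp (- V x) \<partial>lborel)"
  define b where "b = measure lborel (ball (0::'a) (\<delta>/2))"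
  have bpos: "b > 0" unfolding b_def using \<delta> by simp
  have bc: "measure lborel (ball (c::'a) (\<delta>/2)) = b" for c
    unfolding b_def using \<delta>(1) by (simp add: content_ball)
  define M where "M = 2 * \<delta> * (Z * exp c1 / b + 1)"
  have Z0: "Z \<ge> 0" unfolding Z_def by (simp add: integral_nonneg_AE)
  have "Z * exp c1 / b \<ge> 0" using Z0 bpos by simp
  then have Mpos: "M > 0" unfolding M_def using \<delta> by (simp add: add_pos_nonneg)
  have "norm x \<le> M" if Vx: "V x \<le> c1" for x
  proof (cases "norm x \<le> 2 * \<delta>")
    case True then show ?thesis unfolding M_def using \<delta> Z0 bpos
      by (smt (verit, best) divide_nonneg_pos exp_ge_zero mult_le_cancel_left1 mult_nonneg_nonneg)
  next
    case False
    define \<rho> where "\<rho> = norm x"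
    have \<rho>: "\<rho> > 2 * \<delta>" using False \<rho>_def by simp
    define n where "n = nat \<lfloor>\<rho> / (2 * \<delta>)\<rfloor>"
    have n1: "real n \<le> \<rho> / (2 * \<delta>)" "\<rho> / (2 * \<delta>) < real n + 1"
      unfolding n_def using \<rho> \<delta> by (auto simp: of_nat_nat)
    define c where "c j = (real j * \<delta> / \<rho>) *\<^sub>R x" for j :: nat
    have in_sub: "V z \<le> c1" if j: "j < n" and z: "z \<in> ball (c j) (\<delta>/2)" for j z
    proof -
      define t where "t = real j * \<delta> / \<rho>"
      have t0: "0 \<le> t" unfolding t_def using \<rho> \<delta> by simp
      have "t < real n * \<delta> / \<rho>" unfolding t_def using j \<rho> \<delta>
        by (simp add: divide_strict_right_mono)
      also have "\<dots> \<le> 1/2" using n1 \<rho> \<delta> by (simp add: field_simps)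
      finally have t1: "t < 1/2" .
      define w where "w = (1 / (1 - t)) *\<^sub>R (z - t *\<^sub>R x)"
      have "norm (z - t *\<^sub>R x) < \<delta> / 2" using z by (simp add: c_def t_def dist_norm norm_minus_commute)
      moreover have "norm w = norm (z - t *\<^sub>R x) / (1 - t)" unfolding w_def using t1 by simp
      ultimately have "norm w < \<delta>" using t0 t1 \<delta>
        using mult_strict_left_mono[of t "1/2" \<delta>] by (simp add: divide_less_eq right_diff_distrib, linarith)
      then have Vw': "V w \<le> c1" by (rule Vw)
      have zeq: "z = (1 - t) *\<^sub>R w + t *\<^sub>R x" unfolding w_def using t1 by simp
      have "V z \<le> (1 - t) * V w + t * V x"
        unfolding zeq by (rule convex_onD[OF conv]) (use t0 t1 in auto)
      also have "\<dots> \<le> (1 - t) * c1 + t * c1"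
        using Vw' Vx t0 t1 by (intro add_mono mult_left_mono) auto
      finally show ?thesis by (simp add: algebra_simps)
    qed
    have disj: "i = j" if "i < n" "j < n" "y \<in> ball (c i) (\<delta>/2)" "y \<in> ball (c j) (\<delta>/2)" for i j y
    proof -
      have lt: "dist (c i) (c j) < \<delta>" using that(3,4) dist_triangle_half_r[of y "c i" \<delta> "c j"]
        by (simp add: dist_commute)
      have "c i - c j = ((real i - real j) * \<delta> / \<rho>) *\<^sub>R x"
        unfolding c_def by (simp add: algebra_simps diff_divide_distrib)
      then have "dist (c i) (c j) = \<bar>(real i - real j) * \<delta> / \<rho>\<bar> * \<rho>"
        by (simp add: dist_norm \<rho>_def)
      moreover have "\<bar>(real i - real j) * \<delta> / \<rho>\<bar> * \<rho> = \<bar>real i - real j\<bar> * \<delta>"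
        using \<rho> \<delta> by (simp add: abs_mult)
      ultimately have "dist (c i) (c j) = \<bar>real i - real j\<bar> * \<delta>" by simp
      with lt have "\<bar>real i - real j\<bar> < 1" using \<delta> by simp
      then show ?thesis by linarith
    qed
    have pw: "exp (- c1) * (\<Sum>j<n. indicator (ball (c j) (\<delta>/2)) y) \<le> exp (- V y)" for y
    proof (cases "\<exists>j<n. y \<in> ball (c j) (\<delta>/2)")
      case True
      then obtain j0 where j0: "j0 < n" "y \<in> ball (c j0) (\<delta>/2)" by blast
      have "(\<Sum>j<n. indicator (ball (c j) (\<delta>/2)) y) = (\<Sum>j<n. if j = j0 then 1 else 0 :: real)"
        using disj j0 by (intro sum.cong) (auto simp: indicator_def)
      also have "\<dots> = 1" using j0 by simp
      finally show ?thesis using in_sub[OF j0] by simp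
    next
      case False
      then have "(\<Sum>j<n. indicator (ball (c j) (\<delta>/2)) y) = (0::real)"
        by (intro sum.neutral) (auto simp: indicator_def)
      then show ?thesis by simp
    qed
    have intb: "integrable lborel (indicator (ball (c j) (\<delta>/2)) :: 'a \<Rightarrow> real)" for j
      using emeasure_bounded_finite[OF bounded_ball] by (intro integrable_real_indicator) auto
    have "(\<integral>y. exp (- c1) * (\<Sum>j<n. indicator (ball (c j) (\<delta>/2)) y) \<partial>lborel) \<le> Z"
      unfolding Z_def using pw int intb by (intro integral_mono) auto
    also have "(\<integral>y. exp (- c1) * (\<Sum>j<n. indicator (ball (c j) (\<delta>/2)) y) \<partial>lborel)
        = exp (- c1) * (\<Sum>j<n. measure lborel (ball (c j) (\<delta>/2)))"
      using intb emeasure_bounded_finite[OF bounded_ball] by (simp add: integral_sum)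
    also have "\<dots> = exp (- c1) * (real n * b)" by (simp add: bc)
    finally have "real n * b \<le> Z * exp c1" by (simp add: exp_minus field_simps)
    then have "real n \<le> Z * exp c1 / b" using bpos by (simp add: field_simps)
    then have "\<rho> / (2 * \<delta>) < Z * exp c1 / b + 1" using n1 by linarith
    then show ?thesis unfolding M_def \<rho>_def[symmetric] using \<delta> by (simp add: field_simps)
  qed
  then show ?thesis using that Mpos by (auto simp: c1_def)
qed

lemma integrable_half_scale:
  fixes V :: "'a::euclidean_space \<Rightarrow> real"
  assumes cont: "continuous_on UNIV V"
    and int: "integrable lborel (\<lambda>x. exp (- V x))"
  shows "integrable lborel (\<lambda>x. exp (- V ((1/2) *\<^sub>R x)))"
proof -
  have Vm[measurable]: "V \<in> borel_measurable borel"
    using cont by (rule borel_measurable_continuous_onI)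
  have "(\<integral>\<^sup>+x. ennreal (exp (- V ((1/2) *\<^sub>R x))) \<partial>lborel)
      = (\<integral>\<^sup>+x. ennreal (exp (- V ((1/2) *\<^sub>R x))) \<partial>(density (distr lborel borel (\<lambda>x. 0 + (2::real) *\<^sub>R x)) (\<lambda>_. \<bar>2::real\<bar>^DIM('a))))"
    by (subst lborel_affine[of 2 0, symmetric]) auto
  also have "\<dots> = (\<integral>\<^sup>+x. ennreal (2^DIM('a)) * ennreal (exp (- V x)) \<partial>lborel)"
    by (subst nn_integral_density) (auto simp: nn_integral_distr)
  also have "\<dots> = ennreal (2^DIM('a)) * (\<integral>\<^sup>+x. ennreal (exp (- V x)) \<partial>lborel)"
    by (rule nn_integral_cmult) auto
  also have "\<dots> < \<infinity>"
    using int unfolding integrable_iff_bounded by (simp add: ennreal_mult_less_top)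
  finally show ?thesis unfolding integrable_iff_bounded by simp
qed

lemma convex_moment:
  fixes V :: "'a::euclidean_space \<Rightarrow> real"
  assumes conv: "convex_on UNIV V" and cont: "continuous_on UNIV V"
    and int: "integrable lborel (\<lambda>x. exp (- V x))"
  shows "integrable lborel (\<lambda>x. norm x * exp (- V x))"
proof -
  have Vm[measurable]: "V \<in> borel_measurable borel"
    using cont by (rule borel_measurable_continuous_onI)
  obtain M where M: "M > 0" "\<And>x. V x \<le> V 0 + 1 \<Longrightarrow> norm x \<le> M"
    using convex_sublevel_bounded[OF conv cont int] by blast
  have grow: "V x \<ge> V 0 + norm x / (2 * M)" if x: "norm x \<ge> 2 * M" for x
  proof -
    define s where "s = 2 * M / norm x"
    have nx: "norm x > 0" using x M by linarith
    have s: "0 < s" "s \<le> 1" unfolding s_def using x nx M by (auto simp: field_simps)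
    have "norm (s *\<^sub>R x) = 2 * M" unfolding s_def using nx M by simp
    then have "\<not> V (s *\<^sub>R x) \<le> V 0 + 1" using M(1) M(2)[of "s *\<^sub>R x"] by linarith
    moreover have "V ((1 - s) *\<^sub>R 0 + s *\<^sub>R x) \<le> (1 - s) * V 0 + s * V x"
      by (rule convex_onD[OF conv]) (use s in auto)
    ultimately have "1 < s * (V x - V 0)" by (simp add: algebra_simps)
    then have "1 / s < V x - V 0" using s by (simp add: field_simps)
    then show ?thesis unfolding s_def by simp
  qed
  have bound: "norm x * exp (- V x) \<le> 2 * M * exp (- V x) + 4 * M * exp (- V ((1/2) *\<^sub>R x))" for x
  proof (cases "norm x \<le> 2 * M")
    case True then show ?thesis
      by (smt (verit) exp_gt_zero mult_right_mono mult_nonneg_nonneg M(1))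
  next
    case False
    have mid: "V ((1/2) *\<^sub>R x) \<le> (1 - 1/2) * V 0 + (1/2) * V x"
      using convex_onD[OF conv, of "1/2" 0 x] by simp
    have g: "V x \<ge> V 0 + norm x / (2 * M)" using grow False by simp
    have "V x \<ge> norm x / (4 * M) + V ((1/2) *\<^sub>R x)" using mid g by (simp add: field_simps)
    then have "exp (- V x) \<le> exp (- (norm x / (4 * M))) * exp (- V ((1/2) *\<^sub>R x))"
      by (simp add: exp_add[symmetric])
    moreover have "norm x * exp (- (norm x / (4 * M))) \<le> 4 * M"
    proof -
      have "norm x / (4 * M) \<le> exp (norm x / (4 * M))"
        by (smt (verit) exp_ge_add_one_self)
      then show ?thesis using M by (simp add: exp_minus field_simps)
    qed
    ultimately have "norm x * exp (- V x) \<le> 4 * M * exp (- V ((1/2) *\<^sub>R x))"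
      by (smt (verit) exp_gt_zero mult_left_mono mult_right_mono norm_ge_zero mult.assoc)
    then show ?thesis using M by (smt (verit) exp_gt_zero mult_pos_pos)
  qed
  have i2: "integrable lborel (\<lambda>x. 2 * M * exp (- V x) + 4 * M * exp (- V ((1/2) *\<^sub>R x)))"
    using int integrable_half_scale[OF cont int] by auto
  show ?thesis
    by (rule Bochner_Integration.integrable_bound[OF i2]) (use bound M in \<open>auto intro!: AE_I2 simp: abs_mult\<close>)
qed




lemma lip_facts:
  fixes G :: "'a::euclidean_space \<Rightarrow> real"
  assumes "1-lipschitz_on UNIV G"
  shows "\<bar>G x - G 0\<bar> \<le> norm x" "G \<in> borel_measurable borel"
proof -
  show "\<bar>G x - G 0\<bar> \<le> norm x"
    using lipschitz_onD[OF assms, of x 0] by (simp add: dist_real_def)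
  show "G \<in> borel_measurable borel"
    using lipschitz_on_continuous_on[OF assms] by (rule borel_measurable_continuous_onI)
qed

lemma lip_integral_diff:
  fixes M N :: "'a::euclidean_space measure" and G :: "'a \<Rightarrow> real"
  assumes M: "prob_space M" and N: "prob_space N" and sM: "sets M = sets borel" and sN: "sets N = sets borel"
    and iM: "integrable M norm" and iN: "integrable N norm"
    and G: "1-lipschitz_on UNIV G"
  shows "integrable M G" "\<bar>(\<integral>x. G x \<partial>M) - (\<integral>x. G x \<partial>N)\<bar> \<le> (\<integral>x. norm x \<partial>M) + (\<integral>x. norm x \<partial>N)"
proof -
  have Gb: "G \<in> borel_measurable borel" by (rule lip_facts(2)[OF G])
  have gen: "integrable P G \<and> (\<integral>x. G x \<partial>P) = (\<integral>x. G x - G 0 \<partial>P) + G 0 \<and>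
     \<bar>\<integral>x. G x - G 0 \<partial>P\<bar> \<le> (\<integral>x. norm x \<partial>P)"
    if P: "prob_space P" "sets P = sets borel" "integrable P norm" for P :: "'a measure"
  proof -
    interpret prob_space P by (rule P(1))
    have meas[measurable]: "G \<in> borel_measurable P"
      using Gb measurable_cong_sets[OF P(2) refl] by blast
    have i1: "integrable P (\<lambda>x. G x - G 0)"
      by (rule Bochner_Integration.integrable_bound[OF P(3)]) (use lip_facts(1)[OF G] in auto)
    have iG: "integrable P G"
      using Bochner_Integration.integrable_add[OF i1 integrable_const[of "G 0"]] by simp
    have eq: "(\<integral>x. G x \<partial>P) = (\<integral>x. G x - G 0 \<partial>P) + G 0"
    proof -
      have "(\<integral>x. G x - G 0 \<partial>P) = (\<integral>x. G x \<partial>P) - (\<integral>x. G 0 \<partial>P)"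
        by (rule Bochner_Integration.integral_diff[OF iG]) (rule integrable_const)
      moreover have "(\<integral>x. G 0 \<partial>P) = G 0"
        using prob_space by (simp only: lebesgue_integral_const) simp
      ultimately show ?thesis by simp
    qed
    have "\<bar>\<integral>x. G x - G 0 \<partial>P\<bar> \<le> (\<integral>x. \<bar>G x - G 0\<bar> \<partial>P)"
      by (rule integral_abs_bound)
    also have "\<dots> \<le> (\<integral>x. norm x \<partial>P)"
      using i1 P(3) lip_facts(1)[OF G] by (intro integral_mono) auto
    finally have bd: "\<bar>\<integral>x. G x - G 0 \<partial>P\<bar> \<le> (\<integral>x. norm x \<partial>P)" .
    show ?thesis using iG eq bd by blast
  qed
  from gen[OF M sM iM] show "integrable M G" by simp
  from gen[OF M sM iM] gen[OF N sN iN]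
  show "\<bar>(\<integral>x. G x \<partial>M) - (\<integral>x. G x \<partial>N)\<bar> \<le> (\<integral>x. norm x \<partial>M) + (\<integral>x. norm x \<partial>N)"
    by linarith
qed

lemma W1_ge:
  fixes M N :: "'a::euclidean_space measure" and F :: "'a \<Rightarrow> real"
  assumes M: "prob_space M" and N: "prob_space N" and sM: "sets M = sets borel" and sN: "sets N = sets borel"
    and iM: "integrable M norm" and iN: "integrable N norm"
    and F: "1-lipschitz_on UNIV F"
  shows "\<bar>(\<integral>x. F x \<partial>M) - (\<integral>x. F x \<partial>N)\<bar> \<le> W1 M N"
proof -
  define B where "B = (\<integral>x. norm x \<partial>M) + (\<integral>x. norm x \<partial>N)"
  have b: "\<forall>G\<in>{F :: 'a \<Rightarrow> real. 1-lipschitz_on UNIV F}. \<bar>(\<integral>x. G x \<partial>M) - (\<integral>x. G x \<partial>N)\<bar> \<le> B"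
    using lip_integral_diff(2)[OF M N sM sN iM iN] unfolding B_def by blast
  have bdd: "bdd_above ((\<lambda>G. \<bar>(\<integral>x. G x \<partial>M) - (\<integral>x. G x \<partial>N)\<bar>) ` {F :: 'a \<Rightarrow> real. 1-lipschitz_on UNIV F})"
    using b by (meson bdd_aboveI2)
  show ?thesis unfolding W1_def
    by (rule cSUP_upper[OF _ bdd]) (use F in simp)
qed




definition cone_le :: "'a::euclidean_space set \<Rightarrow> real \<Rightarrow> 'a set" where
  "cone_le A \<rho> = {t *\<^sub>R s | t s. 0 < t \<and> t \<le> \<rho> \<and> s \<in> A}"

lemma cone_le_vimage:
  assumes "\<rho> > 0"
  shows "cone_le A \<rho> = (\<lambda>x. (1/\<rho>) *\<^sub>R x) -` unit_cone A"
proof (intro set_eqI iffI)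
  fix x assume "x \<in> cone_le A \<rho>"
  then obtain t s where "x = t *\<^sub>R s" "0 < t" "t \<le> \<rho>" "s \<in> A" unfolding cone_le_def by auto
  then show "x \<in> (\<lambda>x. (1/\<rho>) *\<^sub>R x) -` unit_cone A" unfolding unit_cone_def using assms
    by (auto intro!: exI[of _ "t / \<rho>"] simp: field_simps)
next
  fix x assume "x \<in> (\<lambda>x. (1/\<rho>) *\<^sub>R x) -` unit_cone A"
  then obtain t s where ts: "(1/\<rho>) *\<^sub>R x = t *\<^sub>R s" "0 < t" "t \<le> 1" "s \<in> A" unfolding unit_cone_def by auto
  have "x = \<rho> *\<^sub>R ((1/\<rho>) *\<^sub>R x)" using assms by simp
  then have "x = (\<rho> * t) *\<^sub>R s" by (simp add: ts(1))
  then show "x \<in> cone_le A \<rho>" unfolding cone_le_def using ts assms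
    by (auto intro!: exI[of _ "\<rho> * t"] simp: mult_le_cancel_left1)
qed

lemma cone_le_image:
  assumes "\<rho> > 0"
  shows "cone_le A \<rho> = (\<lambda>x. \<rho> *\<^sub>R x + 0) ` unit_cone A"
proof -
  have "(\<lambda>x. \<rho> *\<^sub>R x + 0) ` unit_cone A = (\<lambda>x. (1/\<rho>) *\<^sub>R x) -` unit_cone A"
  proof (intro set_eqI iffI)
    fix x assume "x \<in> (\<lambda>x. \<rho> *\<^sub>R x + 0) ` unit_cone A"
    then show "x \<in> (\<lambda>x. (1/\<rho>) *\<^sub>R x) -` unit_cone A" using assms by auto
  next
    fix x assume x: "x \<in> (\<lambda>x. (1/\<rho>) *\<^sub>R x) -` unit_cone A"
    have "x = \<rho> *\<^sub>R ((1/\<rho>) *\<^sub>R x) + 0" using assms by simp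
    then show "x \<in> (\<lambda>x. \<rho> *\<^sub>R x + 0) ` unit_cone A" using x by (intro rev_image_eqI) auto
  qed
  then show ?thesis using cone_le_vimage[OF assms] by simp
qed

lemma cone_le_sets:
  assumes "unit_cone A \<in> sets lebesgue" "\<rho> > 0"
  shows "cone_le A \<rho> \<in> sets lebesgue"
proof -
  have "(\<lambda>x::'a. (1/\<rho>) *\<^sub>R x) -` unit_cone A \<inter> space lebesgue \<in> sets lebesgue"
    by (rule measurable_sets[OF lebesgue_measurable_scaling assms(1)])
  then show ?thesis using cone_le_vimage[OF assms(2), of A] by simp
qed

lemma cone_le_emeasure:
  fixes A :: "'a::euclidean_space set"
  assumes "\<rho> > 0"
  shows "emeasure lebesgue (cone_le A \<rho>) = ennreal (\<rho> ^ DIM('a)) * emeasure lebesgue (unit_cone A)"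
  using emeasure_lebesgue_affine[of \<rho> 0 "unit_cone A"] cone_le_image[OF assms, of A] assms by simp

lemma cone_le_mono: "\<rho> \<le> \<rho>' \<Longrightarrow> cone_le A \<rho> \<subseteq> cone_le A \<rho>'"
  unfolding cone_le_def by force

lemma cone_le_cball:
  assumes "A \<subseteq> sphere 0 1"
  shows "cone_le A \<rho> \<subseteq> cball 0 \<rho>"
  unfolding cone_le_def using assms by (auto simp: subset_iff)

lemma unit_cone_finite:
  assumes "A \<subseteq> sphere 0 1"
  shows "emeasure lebesgue (unit_cone A) < \<infinity>"
proof -
  have "unit_cone A \<subseteq> cball 0 1" using cone_le_cball[OF assms, of 1]
    unfolding cone_le_def unit_cone_def by simp
  then have "emeasure lebesgue (unit_cone A) \<le> emeasure lebesgue (cball (0::'a) 1)"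
    by (intro emeasure_mono) auto
  also have "\<dots> = emeasure lborel (cball (0::'a) 1)" by simp
  also have "\<dots> < \<infinity>" by (rule emeasure_bounded_finite) simp
  finally show ?thesis .
qed

lemma cone_le_measure:
  fixes A :: "'a::euclidean_space set"
  assumes "\<rho> > 0" "A \<subseteq> sphere 0 1"
  shows "emeasure lebesgue (cone_le A \<rho>) = ennreal (\<rho> ^ DIM('a) * measure lebesgue (unit_cone A))"
  using cone_le_emeasure[OF assms(1), of A] unit_cone_finite[OF assms(2)] assms(1)
  by (simp add: emeasure_eq_ennreal_measure ennreal_mult'' less_top)

lemma shell_measure:
  fixes A :: "'a::euclidean_space set"
  assumes A: "A \<subseteq> sphere 0 1" "unit_cone A \<in> sets lebesgue"
    and R: "R > 0" and \<rho>: "R \<le> \<rho>"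
    and BN: "B \<in> sets borel" "negligible N" "B \<union> N = (\<Union>n. cone_le A (real n)) - cone_le A R"
  shows "emeasure lborel (B \<inter> cball 0 \<rho>) \<ge> ennreal (measure lebesgue (unit_cone A) * (\<rho> ^ DIM('a) - R ^ DIM('a)))"
proof -
  define L where "L = measure lebesgue (unit_cone A)"
  have \<rho>0: "\<rho> > 0" using R \<rho> by linarith
  have sub: "cone_le A \<rho> - cone_le A R \<subseteq> (B \<inter> cball 0 \<rho>) \<union> N"
  proof
    fix x assume x: "x \<in> cone_le A \<rho> - cone_le A R"
    obtain n :: nat where "\<rho> \<le> real n" using real_arch_simple by blast
    then have "x \<in> (\<Union>n. cone_le A (real n)) - cone_le A R" using x cone_le_mono[of \<rho> "real n" A] by blast
    moreover have "x \<in> cball 0 \<rho>" using x cone_le_cball[OF A(1)] by blast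
    ultimately show "x \<in> (B \<inter> cball 0 \<rho>) \<union> N" using BN(3) by blast
  qed
  have s1: "cone_le A \<rho> \<in> sets lebesgue" "cone_le A R \<in> sets lebesgue"
    using cone_le_sets[OF A(2)] \<rho>0 R by auto
  have fin: "emeasure lebesgue (cone_le A R) \<noteq> \<infinity>"
    using cone_le_measure[OF R A(1)] by simp
  have "emeasure lebesgue (cone_le A \<rho> - cone_le A R) = emeasure lebesgue (cone_le A \<rho>) - emeasure lebesgue (cone_le A R)"
    using s1 fin cone_le_mono[OF \<rho>, of A] by (intro emeasure_Diff) auto
  also have "\<dots> = ennreal (\<rho> ^ DIM('a) * L) - ennreal (R ^ DIM('a) * L)"
    using cone_le_measure[OF R A(1)] cone_le_measure[OF \<rho>0 A(1)] by (simp add: L_def)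
  also have "\<dots> = ennreal (L * (\<rho> ^ DIM('a) - R ^ DIM('a)))"
    using R \<rho> by (subst ennreal_minus) (auto simp: L_def algebra_simps intro!: mult_right_mono power_mono)
  finally have e1: "emeasure lebesgue (cone_le A \<rho> - cone_le A R) = ennreal (L * (\<rho> ^ DIM('a) - R ^ DIM('a)))" .
  have "N \<in> null_sets lebesgue" using BN(2) negligible_iff_null_sets by blast
  have "emeasure lebesgue (cone_le A \<rho> - cone_le A R) \<le> emeasure lebesgue ((B \<inter> cball 0 \<rho>) \<union> N)"
    using sub BN \<open>N \<in> null_sets lebesgue\<close> by (intro emeasure_mono) auto
  also have "\<dots> = emeasure lebesgue (B \<inter> cball 0 \<rho>)"
    using BN \<open>N \<in> null_sets lebesgue\<close> by (intro emeasure_Un_null_set) auto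
  also have "\<dots> = emeasure lborel (B \<inter> cball 0 \<rho>)"
    using BN by simp
  finally show ?thesis using e1 by (simp add: L_def)
qed

lemma exp_tail_nn:
  fixes c a :: real
  assumes c: "c > 0"
  shows "(\<integral>\<^sup>+u. ennreal (c * exp (- c * u)) * indicator {a..} u \<partial>lborel) = ennreal (exp (- c * a))"
proof -
  have "((\<lambda>u. c * exp (- c * u)) has_integral c * (exp (- c * a) / c)) {a..}"
    by (rule has_integral_mult_right[OF has_integral_exp_minus_to_infinity[OF c]])
  then have "((\<lambda>u. c * exp (- c * u)) has_integral exp (- c * a)) {a..}" using c by simp
  from nn_integral_has_integral_lebesgue'[OF _ this] c show ?thesis by simp
qed

lemma gamma_scaled:
  fixes c p :: real
  assumes c: "c > 0" and p: "p \<ge> 0"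
  shows "(\<integral>\<^sup>+u. ennreal (c * exp (- c * u)) * indicator {0..} u * ennreal (u powr p) \<partial>lborel)
       = ennreal (Gamma (p + 1) / c powr p)"
proof -
  define f where "f t = ennreal (indicator {0..} t * t powr p / exp t)" for t :: real
  have G: "ennreal (Gamma (p + 1)) = (\<integral>\<^sup>+t. f t \<partial>lborel)"
    unfolding f_def using Gamma_conv_nn_integral_real[of "p + 1"] p by simp
  have fm: "f \<in> borel_measurable borel" unfolding f_def by measurable
  have "(\<integral>\<^sup>+t. f t \<partial>lborel) = ennreal \<bar>c\<bar> * (\<integral>\<^sup>+x. f (0 + c * x) \<partial>lborel)"
    using nn_integral_real_affine[OF fm, of c 0] c by simp
  have pw: "ennreal (c * exp (- c * u)) * indicator {0..} u * ennreal (u powr p)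
      = ennreal (c powr (- p)) * (ennreal c * f (0 + c * u))" for u
  proof (cases "u \<ge> 0")
    case True
    have "c * exp (- c * u) * u powr p = c powr (- p) * (c * ((c * u) powr p / exp (c * u)))"
      using c True by (simp add: powr_mult powr_minus exp_minus field_simps)
    then show ?thesis using True c unfolding f_def
      by (simp add: ennreal_mult'' [symmetric] mult_nonneg_nonneg)
  next
    case False
    then show ?thesis using c unfolding f_def by (simp add: indicator_def zero_le_mult_iff)
  qed
  have "(\<integral>\<^sup>+u. ennreal (c * exp (- c * u)) * indicator {0..} u * ennreal (u powr p) \<partial>lborel)
      = (\<integral>\<^sup>+u. ennreal (c powr (- p)) * (ennreal c * f (0 + c * u)) \<partial>lborel)"
    by (simp only: pw)
  also have "\<dots> = ennreal (c powr (- p)) * (ennreal c * (\<integral>\<^sup>+u. f (0 + c * u) \<partial>lborel))"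
    using fm by (simp add: nn_integral_cmult)
  also have "ennreal c * (\<integral>\<^sup>+u. f (0 + c * u) \<partial>lborel) = ennreal (Gamma (p + 1))"
    using G nn_integral_real_affine[OF fm, of c 0] c by simp
  also have "ennreal (c powr (- p)) * ennreal (Gamma (p + 1)) = ennreal (Gamma (p + 1) / c powr p)"
    using c p by (simp add: ennreal_mult'' [symmetric] Gamma_real_pos powr_minus divide_inverse mult.commute)
  finally show ?thesis .
qed

lemma tonelli_gamma:
  fixes B :: "'a::euclidean_space set" and \<psi> :: "real \<Rightarrow> real" and \<phi> :: "'a \<Rightarrow> real"
  assumes B[measurable]: "B \<in> sets borel" and c: "c > 0" and L: "L \<ge> 0"
    and \<psi>[measurable]: "\<psi> \<in> borel_measurable borel"
    and meas: "\<And>u. u \<ge> 0 \<Longrightarrow> emeasure lborel (B \<inter> cball 0 (\<psi> u)) \<ge> ennreal (L * sqrt u ^ DIM('a))"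
    and \<phi>: "\<And>y u. y \<in> B \<Longrightarrow> u \<ge> 0 \<Longrightarrow> (norm y \<le> \<psi> u \<longleftrightarrow> \<phi> y \<le> u)"
    and \<phi>0: "\<And>y. y \<in> B \<Longrightarrow> \<phi> y \<ge> 0"
  shows "(\<integral>\<^sup>+y. indicator B y * ennreal (exp (- c * \<phi> y)) \<partial>lborel)
           \<ge> ennreal (L * Gamma (DIM('a)/2 + 1) / c powr (DIM('a)/2))"
proof -
  have psf: "pair_sigma_finite (lborel :: 'a measure) (lborel :: real measure)"
    by (simp add: pair_sigma_finite_def sigma_finite_lborel)
  define k where "k u = ennreal (c * exp (- c * u)) * indicator {0..} u" for u :: real
  define F where "F p = indicator B (fst p) * k (snd p) * indicator {(y, u). norm y \<le> \<psi> u} p" for p :: "'a \<times> real"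
  have Fm: "F \<in> borel_measurable (lborel \<Otimes>\<^sub>M lborel)" unfolding F_def k_def by measurable
  have step1: "indicator B y * ennreal (exp (- c * \<phi> y)) = (\<integral>\<^sup>+u. F (y, u) \<partial>lborel)" for y
  proof (cases "y \<in> B")
    case True
    have "(\<integral>\<^sup>+u. F (y, u) \<partial>lborel) = (\<integral>\<^sup>+u. ennreal (c * exp (- c * u)) * indicator {\<phi> y..} u \<partial>lborel)"
    proof (intro nn_integral_cong)
      fix u :: real
      show "F (y, u) = ennreal (c * exp (- c * u)) * indicator {\<phi> y..} u"
        using True \<phi>[OF True, of u] \<phi>0[OF True] unfolding F_def k_def
        by (cases "u \<ge> 0") (auto simp: indicator_def)
    qed
    also have "\<dots> = ennreal (exp (- c * \<phi> y))" by (rule exp_tail_nn[OF c])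
    finally show ?thesis using True by simp
  next
    case False then show ?thesis by (simp add: F_def)
  qed
  have "(\<integral>\<^sup>+y. indicator B y * ennreal (exp (- c * \<phi> y)) \<partial>lborel) = (\<integral>\<^sup>+y. (\<integral>\<^sup>+u. F (y, u) \<partial>lborel) \<partial>lborel)"
    by (simp only: step1)
  also have "\<dots> = (\<integral>\<^sup>+u. (\<integral>\<^sup>+y. F (y, u) \<partial>lborel) \<partial>lborel)"
    using pair_sigma_finite.Fubini[OF psf Fm] by simp
  also have "\<dots> \<ge> (\<integral>\<^sup>+u. k u * ennreal (L * sqrt u ^ DIM('a)) \<partial>lborel)"
  proof (intro nn_integral_mono)
    fix u :: real
    have "(\<integral>\<^sup>+y. F (y, u) \<partial>lborel) = (\<integral>\<^sup>+y. k u * indicator (B \<inter> cball 0 (\<psi> u)) y \<partial>lborel)"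
      unfolding F_def by (intro nn_integral_cong) (auto simp: indicator_def mult.commute)
    also have "\<dots> = k u * emeasure lborel (B \<inter> cball 0 (\<psi> u))"
      by (rule nn_integral_cmult_indicator) simp
    finally have eq: "(\<integral>\<^sup>+y. F (y, u) \<partial>lborel) = k u * emeasure lborel (B \<inter> cball 0 (\<psi> u))" .
    show "k u * ennreal (L * sqrt u ^ DIM('a)) \<le> (\<integral>\<^sup>+y. F (y, u) \<partial>lborel)"
    proof (cases "u \<ge> 0")
      case True then show ?thesis unfolding eq using meas[OF True] by (intro mult_left_mono) auto
    next
      case False then show ?thesis by (simp add: k_def)
    qed
  qed
  also have "(\<integral>\<^sup>+u. k u * ennreal (L * sqrt u ^ DIM('a)) \<partial>lborel)
      = (\<integral>\<^sup>+u. ennreal L * (ennreal (c * exp (- c * u)) * indicator {0..} u * ennreal (u powr (DIM('a)/2))) \<partial>lborel)"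
  proof (intro nn_integral_cong)
    fix u :: real
    show "k u * ennreal (L * sqrt u ^ DIM('a)) = ennreal L * (ennreal (c * exp (- c * u)) * indicator {0..} u * ennreal (u powr (DIM('a)/2)))"
    proof (cases "u \<ge> 0")
      case True
      have "sqrt u ^ DIM('a) = u powr (DIM('a)/2)"
      proof (cases "u = 0")
        case True then show ?thesis by simp
      next
        case False
        then have u0: "u > 0" using \<open>u \<ge> 0\<close> by simp
        have "sqrt u ^ DIM('a) = sqrt u powr real DIM('a)"
          using u0 by (simp add: powr_realpow)
        also have "\<dots> = (u powr (1/2)) powr real DIM('a)" using u0 by (simp add: powr_half_sqrt)
        also have "\<dots> = u powr (DIM('a)/2)" by (simp add: powr_powr)
        finally show ?thesis .
      qed
      then show ?thesis using True L unfolding k_def by (simp add: ennreal_mult'' mult_ac)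
    next
      case False then show ?thesis by (simp add: k_def)
    qed
  qed
  also have "\<dots> = ennreal L * ennreal (Gamma (DIM('a)/2 + 1) / c powr (DIM('a)/2))"
    using gamma_scaled[OF c, of "DIM('a)/2"] by (subst nn_integral_cmult) auto
  also have "\<dots> = ennreal (L * Gamma (DIM('a)/2 + 1) / c powr (DIM('a)/2))"
    using L by (simp add: ennreal_mult'' [symmetric])
  finally show ?thesis .
qed




lemma pow_superadd1:
  fixes R w :: real
  assumes "R \<ge> 0" "w \<ge> 0" "d \<ge> 1"
  shows "(R + w) ^ d \<ge> R ^ d + w ^ d"
proof -
  obtain e where d: "d = Suc e" using assms(3) by (cases d) auto
  have "(R + w) ^ d = (R + w) ^ e * R + (R + w) ^ e * w" by (simp add: d algebra_simps)
  also have "\<dots> \<ge> R ^ e * R + w ^ e * w"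
    using assms by (intro add_mono mult_right_mono power_mono) auto
  finally show ?thesis by (simp add: d mult.commute)
qed

lemma pow_superadd2:
  fixes R u :: real
  assumes "R \<ge> 0" "u \<ge> 0" "d \<ge> 2"
  shows "sqrt (R^2 + u) ^ d - R ^ d \<ge> sqrt u ^ d"
proof -
  obtain e where d: "d = Suc (Suc e)" using assms(3) by (metis add_2_eq_Suc le_Suc_ex)
  define s where "s = sqrt (R^2 + u)"
  define w where "w = sqrt u"
  have s2: "s^2 = R^2 + w ^ 2" unfolding s_def w_def using assms by simp
  have sR: "s \<ge> R" unfolding s_def using assms by (simp add: real_le_rsqrt)
  have sw: "s \<ge> w" unfolding s_def w_def by (rule real_sqrt_le_mono) (use assms in simp)
  have w0: "w \<ge> 0" unfolding w_def using assms by simp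
  have "s ^ d = s ^ e * s^2" by (simp add: d power2_eq_square)
  also have "\<dots> = s ^ e * R^2 + s ^ e * w ^ 2" by (simp add: s2 algebra_simps)
  also have "\<dots> \<ge> R ^ e * R^2 + w ^ e * w ^ 2"
    using assms sR sw w0 by (intro add_mono mult_right_mono power_mono) auto
  finally have "s ^ d \<ge> R ^ d + w ^ d" by (simp add: d power2_eq_square mult_ac)
  then show ?thesis unfolding s_def w_def by simp
qed

lemma jordan:
  fixes x :: real
  assumes "0 \<le> x" "x \<le> pi/2"
  shows "2 / pi * x \<le> sin x"
proof -
  have cv: "convex_on {0..pi/2} (\<lambda>x. - sin x)"
  proof (rule convex_on_realI[where f'="\<lambda>x. - cos x"])
    show "connected {0..pi/2}" by simp
    show "((\<lambda>x. - sin x) has_real_derivative - cos x) (at x)" for x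
      by (auto intro!: derivative_eq_intros)
    show "- cos x \<le> - cos y" if "x \<in> {0..pi/2}" "y \<in> {0..pi/2}" "x \<le> y" for x y
      using that by (simp add: cos_monotone_0_pi_le)
  qed
  define t where "t = 2 / pi * x"
  have t: "0 \<le> t" "t \<le> 1" unfolding t_def using assms pi_gt_zero by (auto simp: field_simps)
  have "- sin ((1 - t) *\<^sub>R 0 + t *\<^sub>R (pi/2)) \<le> (1 - t) * (- sin 0) + t * (- sin (pi/2))"
    by (rule convex_onD[OF cv]) (use t in auto)
  moreover have "(1 - t) *\<^sub>R 0 + t *\<^sub>R (pi/2) = x" unfolding t_def by simp
  ultimately show ?thesis unfolding t_def by simp
qed

lemma arccos_bound:
  fixes \<theta> :: real
  assumes "\<theta> > 1"
  shows "arccos (\<theta> powr (-1/2)) \<le> pi / 2 * sqrt ((\<theta> - 1) / \<theta>)"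
proof -
  define y where "y = \<theta> powr (-1/2)"
  have "\<theta> powr (-1/2) = inverse (\<theta> powr (1/2))" using powr_minus[of \<theta> "1/2"] by simp
  also have "\<theta> powr (1/2) = sqrt \<theta>" using assms by (intro powr_half_sqrt) simp
  finally have yeq: "y = inverse (sqrt \<theta>)" unfolding y_def .
  have sq1: "sqrt \<theta> \<ge> 1" using assms by simp
  have y0: "0 < y" unfolding yeq using sq1 by simp
  have y1: "y \<le> 1" unfolding yeq using sq1 by (simp add: inverse_le_1_iff)
  have y2: "y^2 = inverse \<theta>" unfolding yeq using assms by (simp add: power_inverse)
  define x where "x = arccos y"
  have x0: "0 \<le> x" unfolding x_def using y0 y1 by (intro arccos_lbound) auto
  have x1: "x \<le> pi/2" unfolding x_def using y0 y1 by (intro arccos_le_pi2) auto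
  have "sin x = sqrt (1 - y^2)" unfolding x_def using y0 y1 by (intro sin_arccos) auto
  also have "1 - y^2 = (\<theta> - 1) / \<theta>" using y2 assms by (simp add: diff_divide_distrib inverse_eq_divide)
  finally have sx: "sin x = sqrt ((\<theta> - 1) / \<theta>)" .
  have "pi/2 * (2 / pi * x) \<le> pi/2 * sin x"
    using jordan[OF x0 x1] by (intro mult_left_mono) auto
  moreover have "pi/2 * (2 / pi * x) = x" by simp
  ultimately show ?thesis using sx unfolding x_def y_def by simp
qed

lemma Gamma_half_int:
  "Gamma (real k + 1/2) = (\<Prod>j = 1..k. (real j - 1/2)) * sqrt pi"
proof (induction k)
  case 0 then show ?case by (simp add: Gamma_one_half_real)
next
  case (Suc k)
  have pos: "real k + 1/2 \<notin> \<int>\<^sub>\<le>\<^sub>0" using nonpos_Ints_nonpos by force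
  have "Gamma (real (Suc k) + 1/2) = Gamma ((real k + 1/2) + 1)" by (simp add: algebra_simps)
  also have "\<dots> = (real k + 1/2) * Gamma (real k + 1/2)" by (rule Gamma_plus1[OF pos])
  also have "\<dots> = (\<Prod>j = 1..Suc k. (real j - 1/2)) * sqrt pi"
    using Suc by (simp add: prod.nat_ivl_Suc' algebra_simps)
  finally show ?case .
qed




theorem proposition3p3:
  fixes \<rho>\<^sub>0 \<beta> lam \<kappa> :: real
    and f V m :: "'a::euclidean_space \<Rightarrow> real"
    and gradV :: "'a \<Rightarrow> 'a"
    and H :: "'a \<Rightarrow> 'a \<Rightarrow>\<^sub>L 'a"
    and A :: "'a set"
  assumes rho0_pos: "\<rho>\<^sub>0 > 0" and beta_pos: "\<beta> > 0"
    and f_nonneg: "\<And>x. f x \<ge> 0"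
    and f_lip: "1-lipschitz_on UNIV f"
    and f_G: "G_cond \<rho>\<^sub>0 \<beta> f A"
    and V_grad: "\<And>x. (V has_derivative (\<lambda>h. gradV x \<bullet> h)) (at x)"
    and V_hess: "\<And>x. (gradV has_derivative blinfun_apply (H x)) (at x)"
    and H_cont: "continuous_on UNIV H"
    and V_int: "integrable lborel (\<lambda>x. exp (- V x))"
    and lambda_ge: "lam \<ge> 1"
    and hess_bounds: "\<And>x v. 0 \<le> v \<bullet> H x v \<and> v \<bullet> H x v \<le> lam * (norm v)\<^sup>2"
    and m_meas: "m \<in> borel_measurable lborel"
    and m_nonneg: "\<And>x. m x \<ge> 0"
    and m_int: "integrable lborel m"
    and m_prob: "(\<integral>x. m x \<partial>lborel) = 1"
    and mu_moment: "integrable (density lborel (\<lambda>x. ennreal (m x))) (\<lambda>x. norm x)"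
    and kappa_ge: "\<kappa> \<ge> 1"
  defines "Z \<equiv> (\<integral>x. exp (- V x) \<partial>lborel)"
  defines "\<mu> \<equiv> density lborel (\<lambda>x. ennreal (m x))"
  defines "\<gamma> \<equiv> density lborel (\<lambda>x. ennreal (exp (- V x) / Z))"
  assumes m_lower: "\<And>x. norm x \<ge> \<rho>\<^sub>0 \<Longrightarrow> m x \<ge> exp (- V x) / (\<kappa> * Z)"
  defines "\<Lambda> \<equiv> lam / 2 + (SUP s \<in> sphere 0 1. \<bar>V (\<rho>\<^sub>0 *\<^sub>R s)\<bar>) / \<rho>\<^sub>0\<^sup>2
                + (SUP s \<in> sphere 0 1. norm (gradV (\<rho>\<^sub>0 *\<^sub>R s))) / \<rho>\<^sub>0"
  defines "d \<equiv> DIM('a)"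
  defines "f_low \<equiv> (INF s \<in> sphere 0 1. f (\<rho>\<^sub>0 *\<^sub>R s))"
  defines "\<delta> \<equiv> (\<integral>x. f x \<partial>\<gamma>) + \<beta> * \<rho>\<^sub>0 - f_low"
  defines "P \<equiv> (\<lambda>r. measure \<mu> {y \<in> space \<mu>. f y - (\<integral>x. f x \<partial>\<mu>) \<ge> r - (W1 \<mu> \<gamma> + \<delta>)})"
  shows "\<forall>r > 0.
     (even d \<longrightarrow>
        P r \<ge> (sphere_measure A * fact (d div 2 - 1) / 2)
               / (Z * \<Lambda> powr (real d / 2) * \<kappa>) * exp (- \<Lambda> * (max (r / \<beta>) \<rho>\<^sub>0)\<^sup>2)) \<and>
     (odd d \<longrightarrow> (\<forall>\<theta> > 1.
        P r \<ge> arccos (\<theta> powr (-1/2)) *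
               (sphere_measure A * (\<Prod>j = 1..(d - 1) div 2. (real j - 1/2)) / sqrt pi)
               / (Z * \<Lambda> powr (real d / 2) * \<kappa>) * exp (- \<theta> * \<Lambda> * (max (r / \<beta>) \<rho>\<^sub>0)\<^sup>2)))"
  proof -
  have d1: "d \<ge> 1" unfolding d_def by (simp add: DIM_positive Suc_le_eq)
  have Vdiff: "isCont V x" for x using V_grad[of x] by (rule has_derivative_continuous)
  have Vcont: "continuous_on UNIV V" using Vdiff by (simp add: continuous_on_eq_continuous_at)
  have gcont: "continuous_on UNIV gradV"
    using V_hess has_derivative_continuous by (simp add: continuous_on_eq_continuous_at) blast
  have Vm[measurable]: "V \<in> borel_measurable borel" using Vcont by (rule borel_measurable_continuous_onI)
  have conv: "convex_on UNIV V"
    by (rule V_convex[OF V_grad V_hess]) (use hess_bounds in blast)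
  have Vup: "V y \<le> V x + gradV x \<bullet> (y - x) + lam / 2 * (norm (y - x))\<^sup>2" for x y
    by (rule V_taylor_upper[OF V_grad V_hess]) (use hess_bounds in blast)
  have Zpos: "Z > 0"
  proof -
    have "Z \<ge> 0" unfolding Z_def by (simp add: integral_nonneg_AE)
    moreover have "Z \<noteq> 0"
    proof
      assume "Z = 0"
      then have "AE x in lborel. exp (- V x) = 0"
        using integral_nonneg_eq_0_iff_AE[OF V_int] unfolding Z_def by simp
      then have "AE x in lborel. x \<notin> (UNIV::'a set)" by simp
      then have "(UNIV::'a set) \<in> null_sets lborel" using AE_iff_null_sets[of "UNIV::'a set" lborel] by simp
      then have "emeasure lborel (UNIV::'a set) = 0" by auto
      then show False by simp
    qed
    ultimately show ?thesis by simp
  qed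
  have mom_g: "integrable lborel (\<lambda>x. norm x * exp (- V x))"
    by (rule convex_moment[OF conv Vcont V_int])
  have sg: "sets \<gamma> = sets borel" unfolding \<gamma>_def by simp
  have sm: "sets \<mu> = sets borel" unfolding \<mu>_def by simp
  have pg: "prob_space \<gamma>"
  proof (rule prob_spaceI)
    have "emeasure \<gamma> (space \<gamma>) = (\<integral>\<^sup>+x. ennreal (exp (- V x) / Z) \<partial>lborel)"
      unfolding \<gamma>_def by (simp add: emeasure_density)
    also have "\<dots> = ennreal (\<integral>x. exp (- V x) / Z \<partial>lborel)"
      using V_int Zpos by (intro nn_integral_eq_integral) auto
    also have "(\<integral>x. exp (- V x) / Z \<partial>lborel) = 1" using Zpos unfolding Z_def by simp
    finally show "emeasure \<gamma> (space \<gamma>) = 1" by simp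
  qed
  have pm: "prob_space \<mu>"
  proof (rule prob_spaceI)
    have "emeasure \<mu> (space \<mu>) = (\<integral>\<^sup>+x. ennreal (m x) \<partial>lborel)"
      unfolding \<mu>_def using m_meas by (simp add: emeasure_density)
    also have "\<dots> = ennreal (\<integral>x. m x \<partial>lborel)"
      using m_int m_nonneg by (intro nn_integral_eq_integral) auto
    finally show "emeasure \<mu> (space \<mu>) = 1" using m_prob by simp
  qed
  have ig: "integrable \<gamma> norm"
    unfolding \<gamma>_def using mom_g Zpos
    by (subst integrable_density) (auto simp: mult.commute)
  have im: "integrable \<mu> norm" using mu_moment unfolding \<mu>_def .
  have W: "(\<integral>x. f x \<partial>\<mu>) - (\<integral>x. f x \<partial>\<gamma>) \<le> W1 \<mu> \<gamma>"
    using W1_ge[OF pm pg sm sg im ig f_lip] by linarith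
  obtain b :: 'a where b: "b \<in> sphere 0 1"
    using nonempty_Basis by (metis ex_in_conv mem_sphere_0 norm_Basis)
  define S1 where "S1 = (SUP s \<in> sphere (0::'a) 1. \<bar>V (\<rho>\<^sub>0 *\<^sub>R s)\<bar>)"
  define S2 where "S2 = (SUP s \<in> sphere (0::'a) 1. norm (gradV (\<rho>\<^sub>0 *\<^sub>R s)))"
  have cV1: "continuous_on UNIV (\<lambda>s::'a. \<bar>V (\<rho>\<^sub>0 *\<^sub>R s)\<bar>)"
    by (intro continuous_intros continuous_on_compose2[OF Vcont]) auto
  have cV2: "continuous_on UNIV (\<lambda>s::'a. norm (gradV (\<rho>\<^sub>0 *\<^sub>R s)))"
    by (intro continuous_intros continuous_on_compose2[OF gcont]) auto
  have bdd1: "bdd_above ((\<lambda>s::'a. \<bar>V (\<rho>\<^sub>0 *\<^sub>R s)\<bar>) ` sphere 0 1)"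
    by (intro bounded_imp_bdd_above compact_imp_bounded compact_continuous_image
        continuous_on_subset[OF cV1]) auto
  have bdd2: "bdd_above ((\<lambda>s::'a. norm (gradV (\<rho>\<^sub>0 *\<^sub>R s))) ` sphere 0 1)"
    by (intro bounded_imp_bdd_above compact_imp_bounded compact_continuous_image
        continuous_on_subset[OF cV2]) auto
  have S1u: "\<bar>V (\<rho>\<^sub>0 *\<^sub>R s)\<bar> \<le> S1" if "s \<in> sphere 0 1" for s
    unfolding S1_def using bdd1 that by (rule cSUP_upper2) auto
  have S2u: "norm (gradV (\<rho>\<^sub>0 *\<^sub>R s)) \<le> S2" if "s \<in> sphere 0 1" for s
    unfolding S2_def using bdd2 that by (rule cSUP_upper2) auto
  have S1p: "S1 \<ge> 0" using S1u[OF b] by linarith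
  have S2p: "S2 \<ge> 0" using S2u[OF b] by (meson norm_ge_zero order_trans)
  have Lam: "\<Lambda> = lam / 2 + S1 / \<rho>\<^sub>0\<^sup>2 + S2 / \<rho>\<^sub>0" unfolding \<Lambda>_def S1_def S2_def ..
  have Lpos: "\<Lambda> > 0" unfolding Lam using lambda_ge S1p S2p rho0_pos by (simp add: add_pos_nonneg)
  have Vbound: "V y \<le> \<Lambda> * (norm y)\<^sup>2" if ny: "norm y \<ge> \<rho>\<^sub>0" for y
  proof -
    define n where "n = norm y"
    have n0: "n > 0" unfolding n_def using ny rho0_pos by linarith
    define s where "s = (1 / n) *\<^sub>R y"
    have ns: "s \<in> sphere 0 1" unfolding s_def n_def using n0 n_def by simp
    have ys: "y = n *\<^sub>R s" unfolding s_def using n0 by simp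
    define y0 where "y0 = \<rho>\<^sub>0 *\<^sub>R s"
    have yy0: "y - y0 = (n - \<rho>\<^sub>0) *\<^sub>R s" unfolding y0_def by (subst ys) (simp add: algebra_simps)
    have nyy0: "norm (y - y0) = n - \<rho>\<^sub>0" unfolding yy0 using ns ny n_def by simp
    have a1: "V y0 \<le> S1" using S1u[OF ns] unfolding y0_def by linarith
    have "gradV y0 \<bullet> (y - y0) \<le> norm (gradV y0) * norm (y - y0)" by (rule norm_cauchy_schwarz)
    also have "\<dots> \<le> S2 * n"
      using S2u[OF ns] nyy0 rho0_pos n0 S2p ny n_def unfolding y0_def by (intro mult_mono) auto
    finally have a2: "gradV y0 \<bullet> (y - y0) \<le> S2 * n" .
    have a3: "(norm (y - y0))\<^sup>2 \<le> n\<^sup>2" unfolding nyy0 using ny rho0_pos n_def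
      by (intro power_mono) auto
    have b1: "S1 \<le> S1 / \<rho>\<^sub>0\<^sup>2 * n\<^sup>2"
    proof -
      have "1 \<le> n\<^sup>2 / \<rho>\<^sub>0\<^sup>2" using ny rho0_pos n_def by (simp add: power_mono)
      then have "S1 * 1 \<le> S1 * (n\<^sup>2 / \<rho>\<^sub>0\<^sup>2)" using S1p by (intro mult_left_mono) auto
      then show ?thesis by simp
    qed
    have b2: "S2 * n \<le> S2 / \<rho>\<^sub>0 * n\<^sup>2"
    proof -
      have "n \<le> n\<^sup>2 / \<rho>\<^sub>0" using ny rho0_pos n_def by (simp add: power2_eq_square field_simps mult_right_mono)
      then have "S2 * n \<le> S2 * (n\<^sup>2 / \<rho>\<^sub>0)" using S2p by (intro mult_left_mono) auto
      then show ?thesis by simp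
    qed
    have b3: "lam / 2 * (norm (y - y0))\<^sup>2 \<le> lam / 2 * n\<^sup>2" using a3 lambda_ge by (intro mult_left_mono) auto
    have "V y \<le> V y0 + gradV y0 \<bullet> (y - y0) + lam / 2 * (norm (y - y0))\<^sup>2" by (rule Vup)
    also have "\<dots> \<le> S1 / \<rho>\<^sub>0\<^sup>2 * n\<^sup>2 + S2 / \<rho>\<^sub>0 * n\<^sup>2 + lam / 2 * n\<^sup>2" using a1 a2 b1 b2 b3 by linarith
    also have "\<dots> = \<Lambda> * (norm y)\<^sup>2" unfolding Lam n_def by (simp add: algebra_simps)
    finally show ?thesis .
  qed
  have flow: "f_low \<le> f (\<rho>\<^sub>0 *\<^sub>R s)" if "s \<in> sphere 0 1" for s
    unfolding f_low_def using that f_nonneg by (intro cINF_lower bdd_belowI2[where m=0]) auto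
  have fm[measurable]: "f \<in> borel_measurable borel"
    using lipschitz_on_continuous_on[OF f_lip] by (rule borel_measurable_continuous_onI)
  from f_G have Asph: "A \<subseteq> sphere 0 1" and Ameas: "unit_cone A \<in> sets lebesgue"
    and Gk: "\<And>y. norm y \<ge> \<rho>\<^sub>0 \<Longrightarrow> y /\<^sub>R norm y \<in> A \<Longrightarrow>
              f y - f (\<rho>\<^sub>0 *\<^sub>R (y /\<^sub>R norm y)) \<ge> \<beta> * norm (y - \<rho>\<^sub>0 *\<^sub>R (y /\<^sub>R norm y))"
    unfolding G_cond_def by auto
  define L where "L = measure lebesgue (unit_cone A)"
  have L0: "L \<ge> 0" unfolding L_def by simp
  have SM: "sphere_measure A = real d * L" unfolding sphere_measure_def L_def d_def ..
  interpret pmu: prob_space \<mu> by (rule pm)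
  show ?thesis
  proof (intro allI impI)
    fix r :: real assume r: "r > 0"
    define R where "R = max (r / \<beta>) \<rho>\<^sub>0"
    have R0: "R \<ge> \<rho>\<^sub>0" "R > 0" unfolding R_def using rho0_pos by auto
    have bR: "\<beta> * R \<ge> r" unfolding R_def using beta_pos
      by (smt (verit, best) max.cobounded1 mult.commute pos_divide_le_eq)
    define C where "C = (\<Union>n. cone_le A (real n)) - cone_le A R"
    have cs: "cone_le A (real n) \<in> sets lebesgue" for n
    proof (cases "n = 0")
      case True then have "cone_le A (real n) = {}" unfolding cone_le_def by auto
      then show ?thesis by simp
    next
      case False then show ?thesis using cone_le_sets[OF Ameas, of "real n"] by simp
    qed
    have Cmeas: "C \<in> sets lebesgue" unfolding C_def using cs cone_le_sets[OF Ameas R0(2)] by auto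
    obtain B N where BN: "B \<in> sets borel" "negligible N" "B \<union> N = C"
      using sets_lebesgue_almost_borel[OF Cmeas] by metis
    have BC: "B \<subseteq> C" using BN(3) by blast
    have BN3: "B \<union> N = (\<Union>n. cone_le A (real n)) - cone_le A R" using BN(3) unfolding C_def .
    have Cpt: "\<exists>t s. y = t *\<^sub>R s \<and> R < t \<and> s \<in> A" if "y \<in> C" for y
    proof -
      from that obtain n t s where ts: "y = t *\<^sub>R s" "0 < t" "s \<in> A" and nR: "y \<notin> cone_le A R"
        unfolding C_def cone_le_def by blast
      have "R < t"
      proof (rule ccontr)
        assume "\<not> R < t"
        then have "y \<in> cone_le A R" unfolding cone_le_def using ts by (auto intro!: exI[of _ t] exI[of _ s])
        then show False using nR by simp
      qed
      then show ?thesis using ts by blast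
    qed
    define E where "E = {y \<in> space \<mu>. f y - (\<integral>x. f x \<partial>\<mu>) \<ge> r - (W1 \<mu> \<gamma> + \<delta>)}"
    have PE: "P r = measure \<mu> E" unfolding P_def E_def ..
    have Eb: "E \<in> sets borel" unfolding E_def \<mu>_def by measurable
    have inC: "norm y > R \<and> y \<in> E \<and> m y \<ge> exp (- \<Lambda> * (norm y)\<^sup>2) / (\<kappa> * Z)" if yC: "y \<in> C" for y
    proof -
      obtain t s where ts: "y = t *\<^sub>R s" "R < t" "s \<in> A" using Cpt[OF yC] by blast
      have s1: "norm s = 1" using ts(3) Asph by auto
      have ny: "norm y = t" using ts s1 R0 by simp
      have ys: "y /\<^sub>R norm y = s" using ny ts R0 by simp
      have "norm (y - \<rho>\<^sub>0 *\<^sub>R s) = norm ((t - \<rho>\<^sub>0) *\<^sub>R s)" using ts by (simp add: algebra_simps)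
      also have "\<dots> = t - \<rho>\<^sub>0" using s1 ts R0 by simp
      finally have nd: "norm (y - \<rho>\<^sub>0 *\<^sub>R s) = t - \<rho>\<^sub>0" .
      have g: "f y - f (\<rho>\<^sub>0 *\<^sub>R s) \<ge> \<beta> * (t - \<rho>\<^sub>0)"
        using Gk[of y] ny ys nd ts R0 by simp
      have fl: "f_low \<le> f (\<rho>\<^sub>0 *\<^sub>R s)" using flow ts(3) Asph by auto
      have bt: "\<beta> * t \<ge> r" using bR ts(2) beta_pos by (smt (verit) mult_strict_left_mono)
      have "f y - (\<integral>x. f x \<partial>\<mu>) \<ge> r - (W1 \<mu> \<gamma> + \<delta>)"
        using g fl bt W unfolding \<delta>_def by (simp add: algebra_simps)
      then have yE: "y \<in> E" unfolding E_def \<mu>_def by simp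
      have ml: "m y \<ge> exp (- V y) / (\<kappa> * Z)" using m_lower[of y] ny ts R0 by simp
      have "exp (- \<Lambda> * (norm y)\<^sup>2) \<le> exp (- V y)" using Vbound[of y] ny ts R0 by simp
      then have "exp (- \<Lambda> * (norm y)\<^sup>2) / (\<kappa> * Z) \<le> exp (- V y) / (\<kappa> * Z)"
        using Zpos kappa_ge by (intro divide_right_mono) auto
      then show ?thesis using ml yE ny ts by simp
    qed
    define I where "I = (\<integral>\<^sup>+y. indicator B y * ennreal (exp (- \<Lambda> * (norm y)\<^sup>2)) \<partial>lborel)"
    have main: "ennreal (1 / (\<kappa> * Z)) * I \<le> ennreal (P r)"
    proof -
      have "ennreal (1 / (\<kappa> * Z)) * I = (\<integral>\<^sup>+y. ennreal (1 / (\<kappa> * Z)) * (indicator B y * ennreal (exp (- \<Lambda> * (norm y)\<^sup>2))) \<partial>lborel)"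
        unfolding I_def using BN(1) by (subst nn_integral_cmult) auto
      also have "\<dots> \<le> (\<integral>\<^sup>+y. ennreal (m y) * indicator E y \<partial>lborel)"
      proof (intro nn_integral_mono)
        fix y
        show "ennreal (1 / (\<kappa> * Z)) * (indicator B y * ennreal (exp (- \<Lambda> * (norm y)\<^sup>2))) \<le> ennreal (m y) * indicator E y"
        proof (cases "y \<in> B")
          case True
          then have h: "norm y > R \<and> y \<in> E \<and> m y \<ge> exp (- \<Lambda> * (norm y)\<^sup>2) / (\<kappa> * Z)" using inC BC by blast
          have "ennreal (1 / (\<kappa> * Z)) * ennreal (exp (- \<Lambda> * (norm y)\<^sup>2)) = ennreal (exp (- \<Lambda> * (norm y)\<^sup>2) / (\<kappa> * Z))"
            using Zpos kappa_ge by (simp add: ennreal_mult''[symmetric])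
          also have "\<dots> \<le> ennreal (m y)" using h by (intro ennreal_leI) auto
          finally show ?thesis using True h by simp
        next
          case False then show ?thesis by simp
        qed
      qed
      also have "\<dots> = emeasure \<mu> E" unfolding \<mu>_def using Eb m_meas by (simp add: emeasure_density)
      also have "\<dots> = ennreal (P r)" unfolding PE by (rule pmu.emeasure_eq_measure)
      finally show ?thesis .
    qed
    have fin: "K / (\<kappa> * Z) \<le> P r" if K0: "K \<ge> 0" and KI: "ennreal K \<le> I" for K
    proof -
      have "ennreal (K / (\<kappa> * Z)) = ennreal (1 / (\<kappa> * Z)) * ennreal K"
        using Zpos kappa_ge K0 by (simp add: ennreal_mult''[symmetric])
      also have "\<dots> \<le> ennreal (1 / (\<kappa> * Z)) * I" using KI by (rule mult_left_mono) simp
      also have "\<dots> \<le> ennreal (P r)" by (rule main)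
      finally show ?thesis using pmu.prob_space by (subst (asm) ennreal_le_iff) (auto simp: PE)
    qed
    have le_sqrt: "a \<le> sqrt z \<longleftrightarrow> a\<^sup>2 \<le> z" if "0 \<le> a" "0 \<le> z" for a z :: real
      using that by (metis real_le_rsqrt real_sqrt_le_iff real_sqrt_pow2 real_sqrt_abs abs_of_nonneg)
    have Bn: "norm y > R" if "y \<in> B" for y using inC BC that by blast
    have Ibig: "ennreal (exp (- \<Lambda> * R\<^sup>2) * (L * Gamma (real d / 2 + 1) / \<Lambda> powr (real d / 2))) \<le> I"
      if d2: "d \<ge> 2"
    proof -
      have T: "ennreal (L * Gamma (DIM('a)/2 + 1) / \<Lambda> powr (DIM('a)/2))
          \<le> (\<integral>\<^sup>+y. indicator B y * ennreal (exp (- \<Lambda> * ((norm y)\<^sup>2 - R\<^sup>2))) \<partial>lborel)"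
      proof (rule tonelli_gamma[OF BN(1) Lpos L0])
        show "(\<lambda>u. sqrt (R\<^sup>2 + u)) \<in> borel_measurable borel" by measurable
        show "ennreal (L * sqrt u ^ DIM('a)) \<le> emeasure lborel (B \<inter> cball 0 (sqrt (R\<^sup>2 + u)))"
          if u: "u \<ge> 0" for u
        proof -
          have "R \<le> sqrt (R\<^sup>2 + u)" using u R0 by (simp add: real_le_rsqrt)
          from shell_measure[OF Asph Ameas R0(2) this BN(1) BN(2) BN3]
          have "ennreal (L * (sqrt (R\<^sup>2 + u) ^ DIM('a) - R ^ DIM('a))) \<le> emeasure lborel (B \<inter> cball 0 (sqrt (R\<^sup>2 + u)))"
            unfolding L_def .
          moreover have "L * sqrt u ^ DIM('a) \<le> L * (sqrt (R\<^sup>2 + u) ^ DIM('a) - R ^ DIM('a))"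
            using pow_superadd2[of R u "DIM('a)"] u R0 d2 L0 unfolding d_def by (intro mult_left_mono) auto
          ultimately show ?thesis by (meson ennreal_leI order_trans)
        qed
        show "(norm y \<le> sqrt (R\<^sup>2 + u)) = ((norm y)\<^sup>2 - R\<^sup>2 \<le> u)" if "y \<in> B" "u \<ge> 0" for y u
          using le_sqrt[of "norm y" "R\<^sup>2 + u"] that R0 by (smt (verit) norm_ge_zero zero_le_power2)
        show "0 \<le> (norm y)\<^sup>2 - R\<^sup>2" if "y \<in> B" for y
          using Bn[OF that] R0 by (smt (verit) power_mono)
      qed
      have "I = (\<integral>\<^sup>+y. ennreal (exp (- \<Lambda> * R\<^sup>2)) * (indicator B y * ennreal (exp (- \<Lambda> * ((norm y)\<^sup>2 - R\<^sup>2)))) \<partial>lborel)"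
        unfolding I_def
        by (intro nn_integral_cong) (simp add: ennreal_mult''[symmetric] exp_add[symmetric] algebra_simps)
      also have "\<dots> = ennreal (exp (- \<Lambda> * R\<^sup>2)) * (\<integral>\<^sup>+y. indicator B y * ennreal (exp (- \<Lambda> * ((norm y)\<^sup>2 - R\<^sup>2))) \<partial>lborel)"
        using BN(1) by (subst nn_integral_cmult) auto
      finally have eqI: "I = ennreal (exp (- \<Lambda> * R\<^sup>2)) * (\<integral>\<^sup>+y. indicator B y * ennreal (exp (- \<Lambda> * ((norm y)\<^sup>2 - R\<^sup>2))) \<partial>lborel)" .
      have K0: "L * Gamma (real d / 2 + 1) / \<Lambda> powr (real d / 2) \<ge> 0"
        using L0 Lpos by (intro divide_nonneg_pos mult_nonneg_nonneg) (auto intro: less_imp_le Gamma_real_pos)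
      have "ennreal (exp (- \<Lambda> * R\<^sup>2)) * ennreal (L * Gamma (real d / 2 + 1) / \<Lambda> powr (real d / 2))
          \<le> ennreal (exp (- \<Lambda> * R\<^sup>2)) * (\<integral>\<^sup>+y. indicator B y * ennreal (exp (- \<Lambda> * ((norm y)\<^sup>2 - R\<^sup>2))) \<partial>lborel)"
        using T unfolding d_def by (intro mult_left_mono) auto
      then show ?thesis unfolding eqI ennreal_mult[OF exp_ge_zero K0] .
    qed
    have Ione: "ennreal (exp (- \<theta> * \<Lambda> * R\<^sup>2) * (L * Gamma (real d / 2 + 1) / (\<Lambda> * \<theta> / (\<theta> - 1)) powr (real d / 2))) \<le> I"
      if th: "\<theta> > 1" for \<theta>
    proof -
      define \<Lambda>' where "\<Lambda>' = \<Lambda> * \<theta> / (\<theta> - 1)"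
      have L'pos: "\<Lambda>' > 0" unfolding \<Lambda>'_def using Lpos th by simp
      have T: "ennreal (L * Gamma (DIM('a)/2 + 1) / \<Lambda>' powr (DIM('a)/2))
          \<le> (\<integral>\<^sup>+y. indicator B y * ennreal (exp (- \<Lambda>' * (norm y - R)\<^sup>2)) \<partial>lborel)"
      proof (rule tonelli_gamma[OF BN(1) L'pos L0])
        show "(\<lambda>u. R + sqrt u) \<in> borel_measurable borel" by measurable
        show "ennreal (L * sqrt u ^ DIM('a)) \<le> emeasure lborel (B \<inter> cball 0 (R + sqrt u))"
          if u: "u \<ge> 0" for u
        proof -
          have "R \<le> R + sqrt u" using u by simp
          from shell_measure[OF Asph Ameas R0(2) this BN(1) BN(2) BN3]
          have "ennreal (L * ((R + sqrt u) ^ DIM('a) - R ^ DIM('a))) \<le> emeasure lborel (B \<inter> cball 0 (R + sqrt u))"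
            unfolding L_def .
          moreover have "L * sqrt u ^ DIM('a) \<le> L * ((R + sqrt u) ^ DIM('a) - R ^ DIM('a))"
            using pow_superadd1[of R "sqrt u" "DIM('a)"] u R0 d1 L0 unfolding d_def by (intro mult_left_mono) auto
          ultimately show ?thesis by (meson ennreal_leI order_trans)
        qed
        show "(norm y \<le> R + sqrt u) = ((norm y - R)\<^sup>2 \<le> u)" if "y \<in> B" "u \<ge> 0" for y u
          using le_sqrt[of "norm y - R" u] that Bn[OF that(1)] by auto
        show "0 \<le> (norm y - R)\<^sup>2" for y by simp
      qed
      have pw: "ennreal (exp (- \<theta> * \<Lambda> * R\<^sup>2)) * (indicator B y * ennreal (exp (- \<Lambda>' * (norm y - R)\<^sup>2)))
          \<le> indicator B y * ennreal (exp (- \<Lambda> * (norm y)\<^sup>2))" for y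
      proof (cases "y \<in> B")
        case True
        define w where "w = norm y - R"
        have w0: "w \<ge> 0" unfolding w_def using Bn[OF True] by simp
        have ny: "norm y = R + w" unfolding w_def by simp
        have amgm: "2 * R * w \<le> (\<theta> - 1) * R\<^sup>2 + w\<^sup>2 / (\<theta> - 1)"
        proof -
          have "0 \<le> ((\<theta> - 1) * R - w)\<^sup>2" by simp
          then have "2 * (\<theta> - 1) * R * w \<le> (\<theta> - 1)\<^sup>2 * R\<^sup>2 + w\<^sup>2" by (simp add: power2_eq_square algebra_simps)
          moreover have "((\<theta> - 1) * R\<^sup>2 + w\<^sup>2 / (\<theta> - 1)) * (\<theta> - 1) = (\<theta> - 1)\<^sup>2 * R\<^sup>2 + w\<^sup>2"
            using th by (simp add: field_simps power2_eq_square)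
          moreover have "(2 * R * w) * (\<theta> - 1) = 2 * (\<theta> - 1) * R * w" by (simp add: algebra_simps)
          ultimately have "(2 * R * w) * (\<theta> - 1) \<le> ((\<theta> - 1) * R\<^sup>2 + w\<^sup>2 / (\<theta> - 1)) * (\<theta> - 1)"
            by linarith
          then show ?thesis using th by (simp add: mult_le_cancel_right)
        qed
        have "\<Lambda> * (norm y)\<^sup>2 = \<Lambda> * R\<^sup>2 + \<Lambda> * (2 * R * w) + \<Lambda> * w\<^sup>2" unfolding ny by (simp add: power2_eq_square algebra_simps)
        also have "\<dots> \<le> \<Lambda> * R\<^sup>2 + \<Lambda> * ((\<theta> - 1) * R\<^sup>2 + w\<^sup>2 / (\<theta> - 1)) + \<Lambda> * w\<^sup>2"
          using amgm Lpos by (intro add_mono mult_left_mono) auto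
        also have "\<dots> = \<theta> * \<Lambda> * R\<^sup>2 + \<Lambda>' * w\<^sup>2" unfolding \<Lambda>'_def using th by (simp add: field_simps)
        finally have "exp (- \<theta> * \<Lambda> * R\<^sup>2) * exp (- \<Lambda>' * w\<^sup>2) \<le> exp (- \<Lambda> * (norm y)\<^sup>2)"
          by (simp add: exp_add[symmetric])
        then show ?thesis using True unfolding w_def by (simp add: ennreal_mult''[symmetric])
      next
        case False then show ?thesis by simp
      qed
      have "ennreal (exp (- \<theta> * \<Lambda> * R\<^sup>2)) * (\<integral>\<^sup>+y. indicator B y * ennreal (exp (- \<Lambda>' * (norm y - R)\<^sup>2)) \<partial>lborel)
          = (\<integral>\<^sup>+y. ennreal (exp (- \<theta> * \<Lambda> * R\<^sup>2)) * (indicator B y * ennreal (exp (- \<Lambda>' * (norm y - R)\<^sup>2))) \<partial>lborel)"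
        using BN(1) by (subst nn_integral_cmult) auto
      also have "\<dots> \<le> I" unfolding I_def by (intro nn_integral_mono pw)
      finally have le1: "ennreal (exp (- \<theta> * \<Lambda> * R\<^sup>2)) * (\<integral>\<^sup>+y. indicator B y * ennreal (exp (- \<Lambda>' * (norm y - R)\<^sup>2)) \<partial>lborel) \<le> I" .
      have K0: "L * Gamma (real d / 2 + 1) / \<Lambda>' powr (real d / 2) \<ge> 0"
        using L0 L'pos by (intro divide_nonneg_pos mult_nonneg_nonneg) (auto intro: less_imp_le Gamma_real_pos)
      have "ennreal (exp (- \<theta> * \<Lambda> * R\<^sup>2)) * ennreal (L * Gamma (real d / 2 + 1) / \<Lambda>' powr (real d / 2))
          \<le> ennreal (exp (- \<theta> * \<Lambda> * R\<^sup>2)) * (\<integral>\<^sup>+y. indicator B y * ennreal (exp (- \<Lambda>' * (norm y - R)\<^sup>2)) \<partial>lborel)"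
        using T unfolding d_def by (intro mult_left_mono) auto
      then have "ennreal (exp (- \<theta> * \<Lambda> * R\<^sup>2) * (L * Gamma (real d / 2 + 1) / \<Lambda>' powr (real d / 2))) \<le> I"
        unfolding ennreal_mult[OF exp_ge_zero K0] using le1 by (rule order_trans)
      then show ?thesis unfolding \<Lambda>'_def .
    qed
    have maxR: "max (r / \<beta>) \<rho>\<^sub>0 = R" unfolding R_def ..
    have Lp: "\<Lambda> powr (real d / 2) > 0" using Lpos by simp
    have sp: "sqrt pi * sqrt pi = pi" "sqrt pi > 0" by auto
    show "(even d \<longrightarrow> P r \<ge> (sphere_measure A * fact (d div 2 - 1) / 2)
               / (Z * \<Lambda> powr (real d / 2) * \<kappa>) * exp (- \<Lambda> * (max (r / \<beta>) \<rho>\<^sub>0)\<^sup>2)) \<and>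
     (odd d \<longrightarrow> (\<forall>\<theta> > 1.
        P r \<ge> arccos (\<theta> powr (-1/2)) *
               (sphere_measure A * (\<Prod>j = 1..(d - 1) div 2. (real j - 1/2)) / sqrt pi)
               / (Z * \<Lambda> powr (real d / 2) * \<kappa>) * exp (- \<theta> * \<Lambda> * (max (r / \<beta>) \<rho>\<^sub>0)\<^sup>2)))"
      unfolding maxR
    proof (intro conjI impI allI)
      assume ev: "even d"
      then obtain k where k: "d = 2 * k" by blast
      have k1: "k \<ge> 1" using d1 k by simp
      have dk: "real d / 2 + 1 = 1 + real k" using k by simp
      have G: "Gamma (real d / 2 + 1) = fact k" unfolding dk by (rule Gamma_fact)
      have fk: "real d * fact (d div 2 - 1) / 2 = (fact k :: real)"
        using k k1 fact_reduce[where 'a=real, of k] by simp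
      define K where "K = exp (- \<Lambda> * R\<^sup>2) * (L * Gamma (real d / 2 + 1) / \<Lambda> powr (real d / 2))"
      have K0: "K \<ge> 0" unfolding K_def G using L0 Lp by simp
      have "K / (\<kappa> * Z) \<le> P r" using fin[OF K0] Ibig d1 k k1 unfolding K_def by simp
      moreover have "(sphere_measure A * fact (d div 2 - 1) / 2) / (Z * \<Lambda> powr (real d / 2) * \<kappa>) * exp (- \<Lambda> * R\<^sup>2)
          = K / (\<kappa> * Z)"
      proof -
        have "sphere_measure A * fact (d div 2 - 1) / 2 = L * fact k"
          unfolding SM using fk by (metis (no_types, lifting) mult.commute times_divide_eq_right mult.assoc)
        then show ?thesis unfolding K_def G by (simp add: field_simps)
      qed
      ultimately show "(sphere_measure A * fact (d div 2 - 1) / 2) / (Z * \<Lambda> powr (real d / 2) * \<kappa>) * exp (- \<Lambda> * R\<^sup>2) \<le> P r"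
        by simp
    next
      fix \<theta> :: real assume od: "odd d" and th: "\<theta> > 1"
      define y where "y = \<theta> powr (-1/2)"
      have yeq: "y = inverse (\<theta> powr (1/2))" unfolding y_def using powr_minus[of \<theta> "1/2"] by simp
      have "\<theta> powr (1/2) \<ge> 1" using th by (intro ge_one_powr_ge_zero) auto
      then have y0: "0 < y" "y \<le> 1" unfolding yeq by (auto simp: inverse_le_1_iff)
      show "arccos (\<theta> powr (-1/2)) * (sphere_measure A * (\<Prod>j = 1..(d - 1) div 2. (real j - 1/2)) / sqrt pi)
               / (Z * \<Lambda> powr (real d / 2) * \<kappa>) * exp (- \<theta> * \<Lambda> * R\<^sup>2) \<le> P r"
      proof (cases "d = 1")
        case True
        define q where "q = sqrt ((\<theta> - 1) / \<theta>)"
        have q0: "q > 0" unfolding q_def using th by simp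
        have "sqrt (\<Lambda> * \<theta> / (\<theta> - 1)) * q = sqrt (\<Lambda> * \<theta> / (\<theta> - 1) * ((\<theta> - 1) / \<theta>))"
          unfolding q_def by (rule real_sqrt_mult[symmetric])
        also have "\<Lambda> * \<theta> / (\<theta> - 1) * ((\<theta> - 1) / \<theta>) = \<Lambda>" using th by (simp add: field_simps)
        finally have sq: "sqrt (\<Lambda> * \<theta> / (\<theta> - 1)) = sqrt \<Lambda> / q" using q0 by (simp add: field_simps)
        have Lq: "(\<Lambda> * \<theta> / (\<theta> - 1)) powr (real d / 2) = sqrt \<Lambda> / q"
          using True th Lpos sq by (simp add: powr_half_sqrt)
        have Lh: "\<Lambda> powr (real d / 2) = sqrt \<Lambda>" using True Lpos by (simp add: powr_half_sqrt)
        have G: "Gamma (real d / 2 + 1) = sqrt pi / 2"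
          using Gamma_half_int[of 1] True by (simp add: field_simps)
        define K where "K = exp (- \<theta> * \<Lambda> * R\<^sup>2) * (L * Gamma (real d / 2 + 1) / (\<Lambda> * \<theta> / (\<theta> - 1)) powr (real d / 2))"
        have K0: "K \<ge> 0" unfolding K_def G Lq using L0 Lpos q0 by simp
        have PK: "K / (\<kappa> * Z) \<le> P r" using fin[OF K0] Ione[OF th] unfolding K_def by simp
        define X where "X = exp (- \<theta> * \<Lambda> * R\<^sup>2) * L / (Z * sqrt \<Lambda> * \<kappa>)"
        have X0: "X \<ge> 0" unfolding X_def using L0 Lpos Zpos kappa_ge by simp
        have e1: "arccos (\<theta> powr (-1/2)) * (sphere_measure A * (\<Prod>j = 1..(d - 1) div 2. (real j - 1/2)) / sqrt pi)
               / (Z * \<Lambda> powr (real d / 2) * \<kappa>) * exp (- \<theta> * \<Lambda> * R\<^sup>2)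
            = (arccos (\<theta> powr (-1/2)) / sqrt pi) * X"
          unfolding X_def SM Lh using True by (simp add: field_simps)
        have e2: "K / (\<kappa> * Z) = (sqrt pi / 2 * q) * X"
          unfolding X_def K_def G Lq using q0 Lpos sp by (simp add: field_simps)
        have "arccos (\<theta> powr (-1/2)) / sqrt pi \<le> (pi / 2 * sqrt ((\<theta> - 1) / \<theta>)) / sqrt pi"
          using arccos_bound[OF th] sp by (intro divide_right_mono) auto
        also have "\<dots> = sqrt pi / 2 * q" unfolding q_def using sp by (simp add: field_simps)
        finally have "arccos (\<theta> powr (-1/2)) / sqrt pi * X \<le> sqrt pi / 2 * q * X"
          using X0 by (intro mult_right_mono) auto
        then have "arccos (\<theta> powr (-1/2)) / sqrt pi * X \<le> K / (\<kappa> * Z)" unfolding e2 .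
        then show ?thesis unfolding e1 using PK by (rule order_trans)
      next
        case False
        from od obtain k where k: "d = 2 * k + 1" by (metis oddE)
        have k1: "k \<ge> 1" using False k by simp
        define Pr where "Pr = (\<Prod>j = 1..k. (real j - 1/2))"
        have Pi0: "Pr \<ge> 0" unfolding Pr_def by (intro prod_nonneg) auto
        have dk: "(d - 1) div 2 = k" using k by simp
        have pos: "real k + 1/2 \<notin> \<int>\<^sub>\<le>\<^sub>0" using nonpos_Ints_nonpos by force
        have "Gamma (real d / 2 + 1) = Gamma ((real k + 1/2) + 1)" using k by (simp add: field_simps)
        also have "\<dots> = (real k + 1/2) * Gamma (real k + 1/2)" by (rule Gamma_plus1[OF pos])
        finally have G: "Gamma (real d / 2 + 1) = (real k + 1/2) * Pr * sqrt pi"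
          unfolding Pr_def Gamma_half_int by simp
        define K where "K = exp (- \<Lambda> * R\<^sup>2) * (L * Gamma (real d / 2 + 1) / \<Lambda> powr (real d / 2))"
        have K0: "K \<ge> 0" unfolding K_def G using L0 Lp Pi0 by simp
        have PK: "K / (\<kappa> * Z) \<le> P r" using fin[OF K0] Ibig False d1 unfolding K_def by simp
        define X where "X = L * Pr / (Z * \<Lambda> powr (real d / 2) * \<kappa>)"
        have X0: "X \<ge> 0" unfolding X_def using L0 Lp Zpos kappa_ge Pi0 by simp
        have e1: "arccos (\<theta> powr (-1/2)) * (sphere_measure A * (\<Prod>j = 1..(d - 1) div 2. (real j - 1/2)) / sqrt pi)
               / (Z * \<Lambda> powr (real d / 2) * \<kappa>) * exp (- \<theta> * \<Lambda> * R\<^sup>2)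
            = arccos (\<theta> powr (-1/2)) * ((real d / sqrt pi) * X * exp (- \<theta> * \<Lambda> * R\<^sup>2))"
          unfolding X_def SM dk Pr_def[symmetric] by (simp add: field_simps)
        have pp: "pi / sqrt pi = sqrt pi" using sp by (metis nonzero_mult_div_cancel_left less_irrefl)
        define c where "c = pi / 2 * (real d / sqrt pi)"
        have "c = real d / 2 * (pi / sqrt pi)" unfolding c_def by simp
        also have "\<dots> = real d / 2 * sqrt pi" using pp by simp
        also have "\<dots> = (real k + 1/2) * sqrt pi" using k by (simp add: field_simps)
        finally have cc: "(real k + 1/2) * sqrt pi = c" by simp
        have Gc: "Gamma (real d / 2 + 1) = Pr * c" unfolding G cc[symmetric] by simp
        have e2': "K / (\<kappa> * Z) = c * X * exp (- \<Lambda> * R\<^sup>2)"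
          unfolding X_def K_def Gc using Zpos kappa_ge Lp by (simp add: field_simps)
        have e2: "K / (\<kappa> * Z) = pi / 2 * ((real d / sqrt pi) * X * exp (- \<Lambda> * R\<^sup>2))"
          unfolding e2' c_def by (simp add: mult.assoc)
        have a1: "arccos (\<theta> powr (-1/2)) \<le> pi / 2" using y0 unfolding y_def by (intro arccos_le_pi2) auto
        have a0: "arccos (\<theta> powr (-1/2)) \<ge> 0" using y0 powr_ge_zero[of \<theta>] unfolding y_def by (intro arccos_lbound) (auto intro: order_trans[of "-1" 0])
        have ex: "exp (- \<theta> * \<Lambda> * R\<^sup>2) \<le> exp (- \<Lambda> * R\<^sup>2)"
          using th Lpos by (simp add: mult_right_mono)
        have em: "(real d / sqrt pi) * X * exp (- \<theta> * \<Lambda> * R\<^sup>2) \<le> (real d / sqrt pi) * X * exp (- \<Lambda> * R\<^sup>2)"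
          using X0 sp ex by (intro mult_left_mono) auto
        have "arccos (\<theta> powr (-1/2)) * ((real d / sqrt pi) * X * exp (- \<theta> * \<Lambda> * R\<^sup>2))
            \<le> pi / 2 * ((real d / sqrt pi) * X * exp (- \<Lambda> * R\<^sup>2))"
          by (rule mult_mono[OF a1 em]) (use a0 X0 sp in auto)
        then have "arccos (\<theta> powr (-1/2)) * ((real d / sqrt pi) * X * exp (- \<theta> * \<Lambda> * R\<^sup>2)) \<le> K / (\<kappa> * Z)"
          unfolding e2 .
        then show ?thesis unfolding e1 using PK by (rule order_trans)
      qed
    qed
  qed
qed

end
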